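(* Let $G=(V,E)$ be a finite directed acyclic graph with nonnegative edge costs $c(u,v)$, a start node $s$ and a target node $t$, where $t$ is the unique node with no outgoing edges. Let $b>1$. Then for the sophisticated agent with present-bias parameter $b$ (with ties in its choices broken arbitrarily), $C_s(s)\le b\cdot C_o(s)$; that is, the cost ratio $C_s(s)/C_o(s)$ is at most $b$.
   Context: $C_o(u)$ denotes the minimum total cost of a directed path from $u$ to $t$. The sophisticated agent with present-bias parameter $b$ is defined recursively over a reverse topological order: $C_s(t)=0$, and for $u\neq t$, $S_s(u)\in\arg\min_{v:(u,v)\in E}\big(b\cdot c(u,v)+C_s(v)\big)$ and $C_s(u)=c(u,S_s(u))+C_s(S_s(u))$. Starting at $s$ the agent follows $s, S_s(s), S_s(S_s(s)),\dots$ until it reaches $t$, incurring total cost $C_s(s)$. The cost ratio is $C_s(s)/C_o(s)$. *)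

theory Defs
  imports Complex_Main
begin

definition is_dpath :: "('a \<times> 'a) set \<Rightarrow> 'a list \<Rightarrow> bool" where
  "is_dpath E xs \<longleftrightarrow> xs \<noteq> [] \<and> (\<forall>i. Suc i < length xs \<longrightarrow> (xs ! i, xs ! Suc i) \<in> E)"

definition path_cost :: "('a \<Rightarrow> 'a \<Rightarrow> real) \<Rightarrow> 'a list \<Rightarrow> real" where
  "path_cost c xs = (\<Sum>i<length xs - 1. c (xs ! i) (xs ! Suc i))"

definition opt_cost :: "('a \<times> 'a) set \<Rightarrow> ('a \<Rightarrow> 'a \<Rightarrow> real) \<Rightarrow> 'a \<Rightarrow> 'a \<Rightarrow> real" where
  "opt_cost E c t u = Min {path_cost c xs | xs. is_dpath E xs \<and> hd xs = u \<and> last xs = t}"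

text \<open>Over a DAG these equations
  are exactly the recursion over a reverse topological order.\<close>
definition sophisticated ::
  "'a set \<Rightarrow> ('a \<times> 'a) set \<Rightarrow> ('a \<Rightarrow> 'a \<Rightarrow> real) \<Rightarrow> real \<Rightarrow> 'a \<Rightarrow> ('a \<Rightarrow> 'a) \<Rightarrow> ('a \<Rightarrow> real) \<Rightarrow> bool"
where
  "sophisticated V E c b t S Cs \<longleftrightarrow>
     Cs t = 0 \<and>
     (\<forall>u\<in>V. u \<noteq> t \<longrightarrow>
        (u, S u) \<in> E \<and>
        (\<forall>v. (u, v) \<in> E \<longrightarrow> b * c u (S u) + Cs (S u) \<le> b * c u v + Cs v) \<and>
        Cs u = c u (S u) + Cs (S u))"

end

theory Submission
  imports Defs
begin

lemma path_cost_cons2: "path_cost c (x # y # zs) = c x y + path_cost c (y # zs)"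
  unfolding path_cost_def by (simp add: sum.lessThan_Suc_shift del: sum.lessThan_Suc)

lemma dpath_cons2: "is_dpath E (x # y # zs) \<longleftrightarrow> (x, y) \<in> E \<and> is_dpath E (y # zs)"
  unfolding is_dpath_def
  by (auto simp: nth_Cons split: nat.splits)

lemma dpath_trancl:
  assumes "is_dpath E xs" "i < j" "j < length xs"
  shows "(xs ! i, xs ! j) \<in> E\<^sup>+"
  using assms(2,3)
proof (induction j)
  case 0 then show ?case by simp
next
  case (Suc j)
  have e: "(xs ! j, xs ! Suc j) \<in> E" using assms(1) Suc.prems unfolding is_dpath_def by auto
  show ?case
  proof (cases "i = j")
    case True then show ?thesis using e by auto
  next
    case False
    then have "(xs ! i, xs ! j) \<in> E\<^sup>+" using Suc by auto
    then show ?thesis using e by auto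
  qed
qed

lemma dpath_distinct:
  assumes "is_dpath E xs" "acyclic E"
  shows "distinct xs"
proof -
  have "xs ! i \<noteq> xs ! j" if "i < j" "j < length xs" for i j
    using dpath_trancl[OF assms(1) that] assms(2) unfolding acyclic_def by auto
  then show ?thesis by (metis distinct_conv_nth nat_neq_iff)
qed

lemma dpath_set:
  assumes "is_dpath E xs" "E \<subseteq> V \<times> V" "hd xs \<in> V"
  shows "set xs \<subseteq> V"
proof
  fix x assume "x \<in> set xs"
  then obtain i where i: "i < length xs" "x = xs ! i" by (auto simp: in_set_conv_nth)
  show "x \<in> V"
  proof (cases i)
    case 0 then show ?thesis using assms i by (simp add: hd_conv_nth is_dpath_def)
  next
    case (Suc k)
    then have "(xs ! k, xs ! i) \<in> E" using assms(1) i unfolding is_dpath_def by auto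
    then show ?thesis using assms(2) i by auto
  qed
qed

lemma lower:
  assumes "\<forall>(u, v)\<in>E. 0 \<le> c u v" "E \<subseteq> V \<times> V"
    and "\<forall>u\<in>V. (\<not> (\<exists>v. (u, v) \<in> E)) \<longleftrightarrow> u = t"
    and "b > 1" and "sophisticated V E c b t S Cs"
  shows "is_dpath E xs \<Longrightarrow> last xs = t \<Longrightarrow> hd xs \<in> V \<Longrightarrow> Cs (hd xs) \<le> b * path_cost c xs"
proof (induction xs rule: induct_list012)
  case 1 then show ?case by (simp add: is_dpath_def)
next
  case (2 x) then show ?case using assms(5) by (simp add: sophisticated_def path_cost_def)
next
  case (3 x y zs)
  have xy: "(x, y) \<in> E" and p: "is_dpath E (y # zs)" using "3.prems"(1) by (simp_all add: dpath_cons2)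
  have yV: "y \<in> V" using xy assms(2) by auto
  have xV: "x \<in> V" using "3.prems" by simp
  have xt: "x \<noteq> t" using assms(3) xV xy by auto
  have IH: "Cs y \<le> b * path_cost c (y # zs)" using "3.IH"(2) p "3.prems"(2) yV by simp
  from assms(5) xV xt have S: "(x, S x) \<in> E" "b * c x (S x) + Cs (S x) \<le> b * c x y + Cs y"
    "Cs x = c x (S x) + Cs (S x)" unfolding sophisticated_def using xy by auto
  have "0 \<le> c x (S x)" using assms(1) S(1) by auto
  then have "c x (S x) \<le> b * c x (S x)" using assms(4) by (simp add: mult_le_cancel_right1)
  then have "Cs x \<le> b * c x y + Cs y" using S by linarith
  also have "\<dots> \<le> b * c x y + b * path_cost c (y # zs)" using IH by simp
  finally show ?case by (simp add: path_cost_cons2 distrib_left)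
qed

theorem theorem1:
  fixes V :: "'a set" and E :: "('a \<times> 'a) set" and c :: "'a \<Rightarrow> 'a \<Rightarrow> real"
    and s t :: 'a and b :: real and S :: "'a \<Rightarrow> 'a" and Cs :: "'a \<Rightarrow> real"
  assumes "finite V"
    and "E \<subseteq> V \<times> V"
    and "acyclic E"
    and "\<forall>(u, v)\<in>E. 0 \<le> c u v"
    and "s \<in> V" and "t \<in> V"
    and "\<forall>u\<in>V. (\<not> (\<exists>v. (u, v) \<in> E)) \<longleftrightarrow> u = t"
    and "b > 1"
    and "sophisticated V E c b t S Cs"
  shows "Cs s \<le> b * opt_cost E c t s"
proof -
  let ?P = "{xs. is_dpath E xs \<and> hd xs = s \<and> last xs = t}"
  let ?A = "{path_cost c xs | xs. is_dpath E xs \<and> hd xs = s \<and> last xs = t}"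
  have fE: "finite E" using assms(1,2) finite_subset by blast
  have wf: "wf (E\<inverse>)" using finite_acyclic_wf_converse[OF fE assms(3)] .
  have ex: "u \<in> V \<longrightarrow> (\<exists>xs. is_dpath E xs \<and> hd xs = u \<and> last xs = t)" for u
    using wf
  proof (induction u rule: wf_induct_rule)
    case (less u)
    show ?case
    proof
      assume uV: "u \<in> V"
      show "\<exists>xs. is_dpath E xs \<and> hd xs = u \<and> last xs = t"
      proof (cases "u = t")
        case True then show ?thesis by (intro exI[of _ "[t]"]) (simp add: is_dpath_def)
      next
        case False
        then obtain v where v: "(u, v) \<in> E" using assms(7) uV by auto
        then have "v \<in> V" using assms(2) by auto
        then obtain xs where xs: "is_dpath E xs" "hd xs = v" "last xs = t" using less v by auto
        then obtain ys where ys: "xs = v # ys" by (cases xs) (auto simp: is_dpath_def)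
        show ?thesis using xs v ys by (intro exI[of _ "u # xs"]) (simp add: dpath_cons2)
      qed
    qed
  qed
  have sub: "?P \<subseteq> {xs. set xs \<subseteq> V \<and> length xs \<le> card V}"
  proof
    fix xs assume "xs \<in> ?P"
    then have d: "is_dpath E xs" "hd xs = s" by auto
    have "set xs \<subseteq> V" using dpath_set[OF d(1) assms(2)] d(2) assms(5) by simp
    moreover have "distinct xs" using dpath_distinct[OF d(1) assms(3)] .
    ultimately have "length xs \<le> card V"
      by (metis assms(1) card_mono distinct_card)
    then show "xs \<in> {xs. set xs \<subseteq> V \<and> length xs \<le> card V}" using \<open>set xs \<subseteq> V\<close> by simp
  qed
  have fP: "finite ?P" using finite_subset[OF sub finite_lists_length_le[OF assms(1)]] .
  have "?A = path_cost c ` ?P" by auto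
  then have fA: "finite ?A" using fP by simp
  have nA: "?A \<noteq> {}" using ex assms(5) by auto
  have "Min ?A \<in> ?A" using Min_in[OF fA nA] .
  then obtain xs where xs: "is_dpath E xs" "hd xs = s" "last xs = t" "Min ?A = path_cost c xs"
    by auto
  have "Cs s \<le> b * path_cost c xs"
    using lower[OF assms(4) assms(2) assms(7) assms(8) assms(9) xs(1) xs(3)] xs(2) assms(5) by simp
  then show ?thesis unfolding opt_cost_def using xs(4) by simp
qed

end
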